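(* Let $k=\mathbb{F}_q$ with $q$ odd, $q>3$, $n\ge1$, $A=M_{2n}(k)$, $J_{2n}=\begin{pmatrix}0&I_n\\-I_n&0\end{pmatrix}$, $a^{\sim}=J_{2n}a^tJ_{2n}^{-1}$. Let $V=k^{2n}$ (row vectors) with $[x,y]=x\,(yJ_{2n})^{t}$, let $M=V^2$ with right $A$-action $(x,y)a=(xa,ya)$, let $\psi$ be a nontrivial character of $(k,+)$, and define $\chi((x,y),(v,z))=\psi([x,z]-[y,v])$ and $\gamma(u,(x,y))=\psi([xu,y])$ for $u\in A$ with $u^{\sim}=u$. Let $\mathrm{U}(\gamma,\chi)$ be the group of all $A$-linear automorphisms $\beta$ of $M$ such that $\gamma(u,\beta(m))=\gamma(u,m)$ for all $u\in A$ with $u^\sim=u$ and all $m\in M$, and $\chi(\beta(m),\beta(m'))=\chi(m,m')$ for all $m,m'\in M$. Then $\mathrm{U}(\gamma,\chi)\cong\mathrm{SL}_2(k)$. *)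

theory Defs
  imports "Jordan_Normal_Form.Matrix" "Jordan_Normal_Form.Determinant" "HOL-Algebra.Group"
begin

(* Row vector times matrix: x a, with x a row vector (entries (x a)_j = sum_i x_i a_ij). *)
definition rvm :: "'a::comm_semiring_0 vec \<Rightarrow> 'a mat \<Rightarrow> 'a vec" where
  "rvm x a = transpose_mat a *\<^sub>v x"

definition Jmat :: "nat \<Rightarrow> 'a::comm_ring_1 mat" where
  "Jmat n = four_block_mat (0\<^sub>m n n) (1\<^sub>m n) (- 1\<^sub>m n) (0\<^sub>m n n)"

definition Jinv :: "nat \<Rightarrow> 'a::comm_ring_1 mat" where
  "Jinv n = four_block_mat (0\<^sub>m n n) (- 1\<^sub>m n) (1\<^sub>m n) (0\<^sub>m n n)"

definition tilde :: "nat \<Rightarrow> 'a::comm_ring_1 mat \<Rightarrow> 'a mat" where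
  "tilde n a = Jmat n * transpose_mat a * Jinv n"

definition sform :: "nat \<Rightarrow> 'a::comm_ring_1 vec \<Rightarrow> 'a vec \<Rightarrow> 'a" where
  "sform n x y = x \<bullet> rvm y (Jmat n)"

definition Mset :: "nat \<Rightarrow> ('a vec \<times> 'a vec) set" where
  "Mset n = carrier_vec (2*n) \<times> carrier_vec (2*n)"

definition addM :: "'a::plus vec \<times> 'a vec \<Rightarrow> 'a vec \<times> 'a vec \<Rightarrow> 'a vec \<times> 'a vec" where
  "addM m m' = (fst m + fst m', snd m + snd m')"

definition actM :: "'a::comm_semiring_0 vec \<times> 'a vec \<Rightarrow> 'a mat \<Rightarrow> 'a vec \<times> 'a vec" where
  "actM m a = (rvm (fst m) a, rvm (snd m) a)"

definition nontriv_add_char :: "('a::ab_group_add \<Rightarrow> complex) \<Rightarrow> bool" where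
  "nontriv_add_char \<psi> \<longleftrightarrow> (\<forall>a b. \<psi> (a + b) = \<psi> a * \<psi> b) \<and> (\<forall>a. \<psi> a \<noteq> 0) \<and> (\<exists>a. \<psi> a \<noteq> 1)"

definition chiM :: "nat \<Rightarrow> ('a::comm_ring_1 \<Rightarrow> complex) \<Rightarrow> 'a vec \<times> 'a vec \<Rightarrow> 'a vec \<times> 'a vec \<Rightarrow> complex" where
  "chiM n \<psi> m m' = \<psi> (sform n (fst m) (snd m') - sform n (snd m) (fst m'))"

definition gammaM :: "nat \<Rightarrow> ('a::comm_ring_1 \<Rightarrow> complex) \<Rightarrow> 'a mat \<Rightarrow> 'a vec \<times> 'a vec \<Rightarrow> complex" where
  "gammaM n \<psi> u m = \<psi> (sform n (rvm (fst m) u) (snd m))"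

definition symA :: "nat \<Rightarrow> 'a::comm_ring_1 mat set" where
  "symA n = {u \<in> carrier_mat (2*n) (2*n). tilde n u = u}"

definition AutA :: "nat \<Rightarrow> ('a::comm_ring_1 vec \<times> 'a vec \<Rightarrow> 'a vec \<times> 'a vec) set" where
  "AutA n = {\<beta>. \<beta> \<in> extensional (Mset n) \<and> bij_betw \<beta> (Mset n) (Mset n)
      \<and> (\<forall>m\<in>Mset n. \<forall>m'\<in>Mset n. \<beta> (addM m m') = addM (\<beta> m) (\<beta> m'))
      \<and> (\<forall>m\<in>Mset n. \<forall>a\<in>carrier_mat (2*n) (2*n). \<beta> (actM m a) = actM (\<beta> m) a)}"

definition Ugroup :: "nat \<Rightarrow> ('a::comm_ring_1 \<Rightarrow> complex) \<Rightarrow> ('a vec \<times> 'a vec \<Rightarrow> 'a vec \<times> 'a vec) monoid" where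
  "Ugroup n \<psi> = \<lparr> carrier = {\<beta> \<in> AutA n.
        (\<forall>u\<in>symA n. \<forall>m\<in>Mset n. gammaM n \<psi> u (\<beta> m) = gammaM n \<psi> u m)
      \<and> (\<forall>m\<in>Mset n. \<forall>m'\<in>Mset n. chiM n \<psi> (\<beta> m) (\<beta> m') = chiM n \<psi> m m')},
     mult = (\<lambda>\<beta> \<beta>'. compose (Mset n) \<beta> \<beta>'),
     one = restrict id (Mset n) \<rparr>"

definition SL2 :: "('a::comm_ring_1 mat) monoid" where
  "SL2 = \<lparr> carrier = {a \<in> carrier_mat 2 2. det a = 1}, mult = (*), one = 1\<^sub>m 2 \<rparr>"

end

theory Submission
  imports Defs "HOL-Number_Theory.Residues"
begin

lemma Jmat_carrier[simp]: "Jmat n \<in> carrier_mat (2*n) (2*n)"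
  unfolding Jmat_def by (auto intro!: four_block_carrier_mat[where ?nr1.0 = n and ?nr2.0=n, simplified])

lemma Jinv_carrier[simp]: "Jinv n \<in> carrier_mat (2*n) (2*n)"
  unfolding Jinv_def by (auto intro!: four_block_carrier_mat[where ?nr1.0 = n and ?nr2.0=n, simplified])

lemma dim_Jmat[simp]: "dim_row (Jmat n) = 2*n" "dim_col (Jmat n) = 2*n"
  using carrier_matD[OF Jmat_carrier[of n]] by auto

lemma Jinv_uminus: "(Jinv n :: 'a::comm_ring_1 mat) = - Jmat n"
  unfolding Jinv_def Jmat_def by (rule eq_matI) auto

lemma transpose_Jmat: "transpose_mat (Jmat n :: 'a::comm_ring_1 mat) = Jinv n"
  unfolding Jinv_def Jmat_def by (rule eq_matI) auto

lemma Jmat_sq: "(Jmat n :: 'a::comm_ring_1 mat) * Jmat n = - 1\<^sub>m (2*n)"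
  unfolding Jmat_def
  by (subst mult_four_block_mat[where ?nr1.0=n and ?nr2.0=n and ?n1.0=n and ?n2.0=n and ?nc1.0=n and ?nc2.0=n]; (rule eq_matI)?) auto

lemma dim_rvm[simp]: "dim_vec (rvm p a) = dim_col a"
  unfolding rvm_def by auto

lemma rvm_carrier[simp]: "a \<in> carrier_mat N N' \<Longrightarrow> rvm p a \<in> carrier_vec N'"
  unfolding carrier_vec_def by auto

lemma rvm_index: assumes "p \<in> carrier_vec N" "a \<in> carrier_mat N N'" "j < N'"
  shows "rvm p a $ j = (\<Sum>i<N. p$i * a$$(i,j))"
  using assms unfolding rvm_def
  by (simp add: scalar_prod_def atLeast0LessThan mult.commute)

lemma rvm_lin: assumes "x \<in> carrier_vec N" "y \<in> carrier_vec N" "a \<in> carrier_mat N N'"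
  shows "rvm (c \<cdot>\<^sub>v x + d \<cdot>\<^sub>v y) a = c \<cdot>\<^sub>v rvm x a + d \<cdot>\<^sub>v rvm y a"
proof (rule eq_vecI)
  fix i assume i: "i < dim_vec (c \<cdot>\<^sub>v rvm x a + d \<cdot>\<^sub>v rvm y a)"
  have "rvm (c \<cdot>\<^sub>v x + d \<cdot>\<^sub>v y) a $ i = (\<Sum>k<N. (c \<cdot>\<^sub>v x + d \<cdot>\<^sub>v y)$k * a$$(k,i))"
    by (rule rvm_index[where N=N]) (use assms i in auto)
  then show "rvm (c \<cdot>\<^sub>v x + d \<cdot>\<^sub>v y) a $ i = (c \<cdot>\<^sub>v rvm x a + d \<cdot>\<^sub>v rvm y a) $ i"
    using assms i by (auto simp: rvm_index sum_distrib_left sum.distrib algebra_simps)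
qed (use assms in auto)

lemma sform_carrier_expand: assumes "x \<in> carrier_vec (2*n)" "y \<in> carrier_vec (2*n)"
  shows "sform n x y = (\<Sum>j<2*n. x$j * rvm y (Jmat n) $ j)"
  using assms unfolding sform_def scalar_prod_def by (auto intro!: sum.cong)

lemma sform_lin1: assumes "x \<in> carrier_vec (2*n)" "y \<in> carrier_vec (2*n)" "z \<in> carrier_vec (2*n)"
  shows "sform n (c \<cdot>\<^sub>v x + d \<cdot>\<^sub>v y) z = c * sform n x z + d * sform n y z"
  using assms by (auto simp: sform_carrier_expand sum_distrib_left sum.distrib algebra_simps)

lemma sform_lin2: assumes "x \<in> carrier_vec (2*n)" "y \<in> carrier_vec (2*n)" "z \<in> carrier_vec (2*n)"
  shows "sform n z (c \<cdot>\<^sub>v x + d \<cdot>\<^sub>v y) = c * sform n z x + d * sform n z y"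
  using assms by (auto simp: sform_carrier_expand rvm_lin[OF assms(1,2) Jmat_carrier] sum_distrib_left sum.distrib algebra_simps)

lemma rvm_add: fixes x :: "'a::comm_semiring_1 vec" assumes "x \<in> carrier_vec N" "y \<in> carrier_vec N" "a \<in> carrier_mat N N'"
  shows "rvm (x + y) a = rvm x a + rvm y a"
  using rvm_lin[OF assms, of 1 1] by simp

lemma sform_add1: assumes "x \<in> carrier_vec (2*n)" "y \<in> carrier_vec (2*n)" "z \<in> carrier_vec (2*n)"
  shows "sform n (x + y) z = sform n x z + sform n y z"
  using sform_lin1[OF assms, of 1 1] by simp

lemma sform_add2: assumes "x \<in> carrier_vec (2*n)" "y \<in> carrier_vec (2*n)" "z \<in> carrier_vec (2*n)"
  shows "sform n z (x + y) = sform n z x + sform n z y"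
  using sform_lin2[OF assms, of 1 1] by simp

definition Lmap :: "'a::comm_ring_1 mat \<Rightarrow> 'a vec \<times> 'a vec \<Rightarrow> 'a vec \<times> 'a vec" where
  "Lmap g m = (g$$(0,0) \<cdot>\<^sub>v fst m + g$$(0,1) \<cdot>\<^sub>v snd m, g$$(1,0) \<cdot>\<^sub>v fst m + g$$(1,1) \<cdot>\<^sub>v snd m)"

lemma Lmap_Mset: "m \<in> Mset n \<Longrightarrow> Lmap g m \<in> Mset n"
  unfolding Lmap_def Mset_def by auto

lemma mat22_index: assumes "g \<in> carrier_mat 2 2" "h \<in> carrier_mat 2 2" "i < 2" "j < 2"
  shows "(g * h) $$ (i,j) = g$$(i,0) * h$$(0,j) + g$$(i,1) * h$$(1,j)"
  using assms by (simp add: scalar_prod_def numeral_2_eq_2 sum.atLeast0_lessThan_Suc)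

lemma Lmap_comp: assumes g: "g \<in> carrier_mat 2 2" and h: "h \<in> carrier_mat 2 2" and m: "m \<in> Mset n"
  shows "Lmap g (Lmap h m) = Lmap (g * h) m"
  using m unfolding Lmap_def Mset_def
  by (auto simp: mat22_index[OF g h] intro!: eq_vecI simp: algebra_simps)

lemma Lmap_one: "m \<in> Mset n \<Longrightarrow> Lmap (1\<^sub>m 2) m = m"
  unfolding Lmap_def Mset_def by (cases m) (auto intro!: eq_vecI)

lemma Lmap_add: "m \<in> Mset n \<Longrightarrow> m' \<in> Mset n \<Longrightarrow> Lmap g (addM m m') = addM (Lmap g m) (Lmap g m')"
  unfolding Lmap_def Mset_def addM_def by (auto intro!: eq_vecI simp: algebra_simps)

lemma Lmap_act: "m \<in> Mset n \<Longrightarrow> a \<in> carrier_mat (2*n) (2*n) \<Longrightarrow> Lmap g (actM m a) = actM (Lmap g m) a"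
  unfolding Lmap_def Mset_def actM_def by (auto simp: rvm_lin)

lemma det2: assumes "A \<in> carrier_mat 2 2" shows "det A = A$$(0,0)*A$$(1,1) - A$$(0,1)*A$$(1,0)"
proof -
  have "det A = (\<Sum>j<2. A $$ (0,j) * cofactor A 0 j)" by (rule laplace_expansion_row[OF assms]) auto
  also have "\<dots> = A $$ (0,0) * cofactor A 0 0 + A $$ (0,1) * cofactor A 0 1" by (simp add: numeral_2_eq_2)
  also have "cofactor A 0 0 = A$$(1,1)" unfolding cofactor_def using assms
    by (subst det_single[of "mat_delete A 0 0"]) (auto simp: mat_delete_def numeral_2_eq_2)
  also have "cofactor A 0 1 = - A$$(1,0)" unfolding cofactor_def using assms
    by (subst det_single[of "mat_delete A 0 1"]) (auto simp: mat_delete_def numeral_2_eq_2)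
  finally show ?thesis by simp
qed

lemma chi_Lmap: assumes g: "g \<in> carrier_mat 2 2" and m: "m \<in> Mset n" and m': "m' \<in> Mset n"
  shows "sform n (fst (Lmap g m)) (snd (Lmap g m')) - sform n (snd (Lmap g m)) (fst (Lmap g m'))
    = det g * (sform n (fst m) (snd m') - sform n (snd m) (fst m'))"
proof -
  obtain x y where xy: "m = (x,y)" "x \<in> carrier_vec (2*n)" "y \<in> carrier_vec (2*n)" using m unfolding Mset_def by auto
  obtain v z where vz: "m' = (v,z)" "v \<in> carrier_vec (2*n)" "z \<in> carrier_vec (2*n)" using m' unfolding Mset_def by auto
  show ?thesis using xy vz unfolding Lmap_def
    by (simp add: sform_lin1 sform_lin2 det2[OF g] algebra_simps)
qed

lemma sform_alt: assumes u: "u \<in> symA n" and two: "(2::'a::field) \<noteq> 0" and x: "x \<in> carrier_vec (2*n)"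
  shows "sform n (rvm x u) x = (0::'a)"
proof -
  let ?J = "Jmat n :: 'a mat"
  have uc: "u \<in> carrier_mat (2*n) (2*n)" and ut: "?J * transpose_mat u * Jinv n = u"
    using u unfolding symA_def tilde_def by auto
  have Juc: "?J * transpose_mat u \<in> carrier_mat (2*n) (2*n)"
    by (rule mult_carrier_mat[of _ _ "2*n"]) (use uc in simp_all)
  define K where "K = u * transpose_mat ?J"
  have Kc: "K \<in> carrier_mat (2*n) (2*n)" unfolding K_def using uc by auto
  have Jxc: "transpose_mat ?J *\<^sub>v x \<in> carrier_vec (2*n)"
    by (rule mult_mat_vec_carrier[of _ "2*n" "2*n"]) (use x in simp_all)
  have "sform n (rvm x u) x = (transpose_mat u *\<^sub>v x) \<bullet> (transpose_mat ?J *\<^sub>v x)"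
    unfolding sform_def rvm_def ..
  also have "\<dots> = x \<bullet> (u *\<^sub>v (transpose_mat ?J *\<^sub>v x))"
    by (rule transpose_vec_mult_scalar[OF uc Jxc x])
  also have "\<dots> = x \<bullet> (K *\<^sub>v x)" unfolding K_def using uc x by (simp add: assoc_mult_mat_vec[symmetric, of _ "2*n" "2*n" _ "2*n"])
  finally have t: "sform n (rvm x u) x = x \<bullet> (K *\<^sub>v x)" .
  have JJ: "Jinv n * Jinv n = - 1\<^sub>m (2*n)"
    unfolding Jinv_uminus using Jmat_sq[of n] by simp
  have "K = u * Jinv n" unfolding K_def transpose_Jmat ..
  also have "\<dots> = (?J * transpose_mat u * Jinv n) * Jinv n" using ut by simp
  also have "\<dots> = (?J * transpose_mat u) * (Jinv n * Jinv n)" by (rule assoc_mult_mat[of _ "2*n" "2*n" _ "2*n" _ "2*n"]) (use uc Juc in simp_all)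
  also have "\<dots> = - (?J * transpose_mat u)" unfolding JJ using uc by simp
  finally have KT: "transpose_mat K = - K"
    unfolding K_def using uc by (simp add: transpose_mult[of _ "2*n" "2*n"] transpose_uminus)
  have "(transpose_mat K *\<^sub>v x) \<bullet> x = x \<bullet> (K *\<^sub>v x)"
    by (rule transpose_vec_mult_scalar[OF Kc x x])
  moreover have "(transpose_mat K *\<^sub>v x) \<bullet> x = - (x \<bullet> (K *\<^sub>v x))"
    unfolding KT using Kc x by (simp add: comm_scalar_prod[of _ "2*n"])
  ultimately have "2 * (x \<bullet> (K *\<^sub>v x)) = 0" by (simp add: algebra_simps)
  with two t show ?thesis by simp
qed

lemma gamma_Lmap: assumes u: "u \<in> symA n" and two: "(2::'a::field) \<noteq> 0" and g: "g \<in> carrier_mat 2 2"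
  and m: "m \<in> (Mset n :: ('a vec \<times> 'a vec) set)"
  shows "sform n (rvm (fst (Lmap g m)) u) (snd (Lmap g m)) = det g * sform n (rvm (fst m) u) (snd m)"
proof -
  have uc: "u \<in> carrier_mat (2*n) (2*n)" using u unfolding symA_def by auto
  obtain x y where xy: "m = (x,y)" "x \<in> carrier_vec (2*n)" "y \<in> carrier_vec (2*n)" using m unfolding Mset_def by auto
  have xu: "rvm x u \<in> carrier_vec (2*n)" "rvm y u \<in> carrier_vec (2*n)" using uc by auto
  have "sform n (rvm (x + y) u) (x + y) = (0::'a)"
    by (rule sform_alt[OF u two]) (use xy in simp)
  then have "sform n (rvm x u) x + sform n (rvm x u) y + sform n (rvm y u) x + sform n (rvm y u) y = 0"
    using xy xu by (simp add: rvm_add[OF _ _ uc] sform_add1 sform_add2 algebra_simps)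
  then have anti: "sform n (rvm y u) x = - sform n (rvm x u) y"
    using sform_alt[OF u two xy(2)] sform_alt[OF u two xy(3)] by (simp add: algebra_simps eq_neg_iff_add_eq_0)
  show ?thesis using xy xu unfolding Lmap_def
    by (simp add: rvm_lin[OF _ _ uc] sform_lin1 sform_lin2 det2[OF g] anti
      sform_alt[OF u two xy(2)] sform_alt[OF u two xy(3)] algebra_simps)
qed

lemma two_ne_zero: assumes "odd (card (UNIV :: 'k::{field,finite} set))" shows "(2::'k) \<noteq> 0"
proof
  assume "(2::'k) = 0"
  then have "of_nat 2 = (0::'k)" by simp
  then have d2: "CHAR('k) dvd 2" by (simp only: of_nat_eq_0_iff_char_dvd)
  have "CHAR('k) dvd card (UNIV :: 'k set)" by (rule CHAR_dvd_CARD)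
  with assms have "odd CHAR('k)" using dvd_trans by blast
  with d2 have "CHAR('k) = 1"
    by (metis dvd_antisym dvd_refl even_numeral nat_dvd_1_iff_1 odd_one prime_nat_iff two_is_prime_nat)
  then have "of_nat 1 = (0::'k)" by (metis of_nat_CHAR)
  then show False by simp
qed

definition coef :: "nat \<Rightarrow> ('a::comm_ring_1 vec \<times> 'a vec \<Rightarrow> 'a vec \<times> 'a vec) \<Rightarrow> 'a mat" where
  "coef n \<beta> = mat 2 2 (\<lambda>(i,j). (if i = 0 then fst else snd) (\<beta> (unit_vec (2*n) 0, unit_vec (2*n) 1)) $ j)"

lemma rvm_two: fixes p :: "'a::comm_ring_1 vec"
  assumes p: "p \<in> carrier_vec N" and N: "1 < N" and j: "j < N"
  shows "rvm p (mat N N (\<lambda>(i,j). if i = 0 then x$j else if i = 1 then y$j else 0)) $ j = p$0 * x$j + p$1 * y$j"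
proof -
  have "rvm p (mat N N (\<lambda>(i,j). if i = 0 then x$j else if i = 1 then y$j else 0)) $ j
    = (\<Sum>k<N. p$k * (mat N N (\<lambda>(i,j). if i = 0 then x$j else if i = 1 then y$j else (0::'a))) $$ (k,j))"
    by (rule rvm_index[OF p]) (use j in auto)
  also have "\<dots> = (\<Sum>k<N. (if k = 0 then p$0 * x$j else 0) + (if k = 1 then p$1 * y$j else 0))"
    using j by (intro sum.cong) auto
  also have "\<dots> = p$0 * x$j + p$1 * y$j" using N by (simp add: sum.distrib)
  finally show ?thesis .
qed

lemma rvm_unit: fixes x :: "'a::comm_ring_1 vec"
  assumes N: "1 < N" and x: "x \<in> carrier_vec N" and y: "y \<in> carrier_vec N"
  shows "rvm (unit_vec N 0) (mat N N (\<lambda>(i,j). if i = 0 then x$j else if i = 1 then y$j else 0)) = x"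
    "rvm (unit_vec N 1) (mat N N (\<lambda>(i,j). if i = 0 then x$j else if i = 1 then y$j else 0)) = y"
  by (rule eq_vecI; use N x y in \<open>simp add: rvm_two\<close>)+

lemma AutA_Lmap: assumes b: "\<beta> \<in> AutA n" and n: "1 \<le> n" and m: "m \<in> (Mset n :: ('a::comm_ring_1 vec \<times> 'a vec) set)"
  shows "\<beta> m = Lmap (coef n \<beta>) m"
proof -
  obtain x y where xy: "m = (x,y)" "x \<in> carrier_vec (2*n)" "y \<in> carrier_vec (2*n)" using m unfolding Mset_def by auto
  define a where "a = mat (2*n) (2*n) (\<lambda>(i,j). if i = 0 then x$j else if i = 1 then y$j else (0::'a))"
  have N: "1 < 2*n" using n by simp
  have ac: "a \<in> carrier_mat (2*n) (2*n)" unfolding a_def by simp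
  have e: "(unit_vec (2*n) 0, unit_vec (2*n) 1) \<in> (Mset n :: ('a vec \<times> 'a vec) set)"
    unfolding Mset_def using N by auto
  have act: "actM (unit_vec (2*n) 0, unit_vec (2*n) 1) a = m"
    unfolding actM_def a_def using rvm_unit[OF N xy(2,3)] xy(1) by simp
  obtain p r where pr: "\<beta> (unit_vec (2*n) 0, unit_vec (2*n) 1) = (p, r)" by fastforce
  have "\<beta> (unit_vec (2*n) 0, unit_vec (2*n) 1) \<in> Mset n"
    using b e unfolding AutA_def by (auto dest: bij_betwE)
  then have prc: "p \<in> carrier_vec (2*n)" "r \<in> carrier_vec (2*n)" using pr unfolding Mset_def by auto
  have "\<beta> m = actM (p, r) a" using b e ac unfolding act[symmetric] AutA_def pr[symmetric] by auto
  also have "\<dots> = Lmap (coef n \<beta>) m"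
  proof -
    have rp: "\<And>j. j < 2*n \<Longrightarrow> rvm p a $ j = p$0*x$j + p$1*y$j" unfolding a_def by (rule rvm_two[OF prc(1) N])
    have rr: "\<And>j. j < 2*n \<Longrightarrow> rvm r a $ j = r$0*x$j + r$1*y$j" unfolding a_def by (rule rvm_two[OF prc(2) N])
    have c: "coef n \<beta> $$ (0,0) = p$0" "coef n \<beta> $$ (0,1) = p$1" "coef n \<beta> $$ (1,0) = r$0" "coef n \<beta> $$ (1,1) = r$1"
      unfolding coef_def pr by simp_all
    have "rvm p a = p$0 \<cdot>\<^sub>v x + p$1 \<cdot>\<^sub>v y" by (rule eq_vecI) (use xy rp ac in auto)
    moreover have "rvm r a = r$0 \<cdot>\<^sub>v x + r$1 \<cdot>\<^sub>v y" by (rule eq_vecI) (use xy rr ac in auto)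
    ultimately show ?thesis unfolding actM_def Lmap_def c xy(1) by simp
  qed
  finally show ?thesis .
qed

definition Lg :: "nat \<Rightarrow> 'a::comm_ring_1 mat \<Rightarrow> 'a vec \<times> 'a vec \<Rightarrow> 'a vec \<times> 'a vec" where
  "Lg n g = restrict (Lmap g) (Mset n)"

lemma coef_Lg: assumes n: "1 \<le> n" and g: "(g::'a::comm_ring_1 mat) \<in> carrier_mat 2 2"
  shows "coef n (Lg n g) = g"
proof -
  have N: "1 < 2*n" using n by simp
  have e: "(unit_vec (2*n) 0, unit_vec (2*n) 1) \<in> (Mset n :: ('a vec \<times> 'a vec) set)"
    unfolding Mset_def using N by auto
  show ?thesis
  proof (rule eq_matI)
    fix i j assume ij: "i < dim_row g" "j < dim_col g"
    then have "i = 0 \<or> i = 1" "j = 0 \<or> j = 1" using g by auto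
    then show "coef n (Lg n g) $$ (i, j) = g $$ (i, j)"
      using ij g e N unfolding coef_def Lg_def Lmap_def by auto
  qed (use g in \<open>auto simp: coef_def\<close>)
qed

lemma AutA_Lg: assumes b: "\<beta> \<in> AutA n" and n: "1 \<le> n"
  shows "\<beta> = Lg n (coef n (\<beta> :: 'a::comm_ring_1 vec \<times> 'a vec \<Rightarrow> _))"
proof
  fix m
  show "\<beta> m = Lg n (coef n \<beta>) m"
  proof (cases "m \<in> Mset n")
    case True then show ?thesis using AutA_Lmap[OF b n True] unfolding Lg_def by simp
  next
    case False then show ?thesis using b unfolding Lg_def AutA_def extensional_def by (cases m) auto
  qed
qed

lemma coef_carrier[simp]: "coef n \<beta> \<in> carrier_mat 2 2"
  unfolding coef_def by simp

lemma sform_e: assumes n: "1 \<le> n"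
  shows "sform n (unit_vec (2*n) 0) (unit_vec (2*n) n) = (-1 :: 'a::comm_ring_1)"
proof -
  have "sform n (unit_vec (2*n) 0) (unit_vec (2*n) n) = rvm (unit_vec (2*n) n) (Jmat n) $ 0"
    unfolding sform_def using n rvm_carrier[OF Jmat_carrier[of n]]
    by (subst scalar_prod_left_unit[of _ "2*n"]) auto
  also have "\<dots> = (\<Sum>k<2*n. unit_vec (2*n) n $ k * (Jmat n :: 'a mat) $$ (k,0))"
    by (rule rvm_index[of _ "2*n"]) (use n in auto)
  also have "\<dots> = (\<Sum>k<2*n. if k = n then (Jmat n :: 'a mat) $$ (n,0) else 0)"
    by (intro sum.cong) auto
  also have "\<dots> = (Jmat n :: 'a mat) $$ (n,0)" using n by simp
  also have "\<dots> = -1" using n unfolding Jmat_def by simp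
  finally show ?thesis .
qed

lemma char_det: assumes psi: "nontriv_add_char \<psi>" and h: "\<And>t. \<psi> (d * t) = \<psi> t"
  shows "(d::'a::field) = 1"
proof (rule ccontr)
  assume d: "d \<noteq> 1"
  from psi obtain a where a: "\<psi> a \<noteq> 1" unfolding nontriv_add_char_def by auto
  define t where "t = a / (d - 1)"
  have "d * t = t + a" using d unfolding t_def by (simp add: field_simps)
  then have "\<psi> t = \<psi> t * \<psi> a" using h[of t] psi unfolding nontriv_add_char_def by metis
  moreover have "\<psi> t \<noteq> 0" using psi unfolding nontriv_add_char_def by auto
  ultimately show False using a by simp
qed

lemma U_det: assumes b: "\<beta> \<in> carrier (Ugroup n \<psi>)" and n: "1 \<le> n" and psi: "nontriv_add_char \<psi>"
  shows "det (coef n (\<beta> :: 'a::field vec \<times> 'a vec \<Rightarrow> _)) = 1"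
proof (rule char_det[OF psi])
  fix t :: 'a
  let ?g = "coef n \<beta>"
  define m where "m = (((-t) \<cdot>\<^sub>v unit_vec (2*n) 0, 0\<^sub>v (2*n)) :: 'a vec \<times> 'a vec)"
  define m' where "m' = ((0\<^sub>v (2*n), unit_vec (2*n) n) :: 'a vec \<times> 'a vec)"
  have mM: "m \<in> Mset n" "m' \<in> Mset n" unfolding m_def m'_def Mset_def by auto
  have bA: "\<beta> \<in> AutA n" using b unfolding Ugroup_def by simp
  have zc: "rvm (0\<^sub>v (2*n)) (Jmat n :: 'a mat) \<in> carrier_vec (2*n)"
    by (rule rvm_carrier[OF Jmat_carrier])
  have s: "sform n (fst m) (snd m') - sform n (snd m) (fst m') = t"
    unfolding m_def m'_def sform_def using sform_e[OF n, where 'a='a] n zc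
    by (simp add: sform_def)
  have "chiM n \<psi> (\<beta> m) (\<beta> m') = chiM n \<psi> m m'" using b mM unfolding Ugroup_def by auto
  then show "\<psi> (det ?g * t) = \<psi> t"
    unfolding chiM_def AutA_Lmap[OF bA n mM(1)] AutA_Lmap[OF bA n mM(2)] chi_Lmap[OF coef_carrier mM] s .
qed

lemma Lg_in_U: fixes g :: "'a::field mat" assumes g: "g \<in> carrier_mat 2 2" and d: "det g = 1" and two: "(2::'a) \<noteq> 0"
  shows "Lg n g \<in> carrier (Ugroup n \<psi>)"
proof -
  define g' where "g' = mat 2 2 (\<lambda>(i,j). if i = 0 then (if j = 0 then g$$(1,1) else - g$$(0,1))
      else (if j = 0 then - g$$(1,0) else g$$(0,0)))"
  have g'c: "g' \<in> carrier_mat 2 2" unfolding g'_def by simp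
  have d': "g$$(0,0)*g$$(1,1) - g$$(0,1)*g$$(1,0) = 1" using d det2[OF g] by simp
  have gg': "g * g' = 1\<^sub>m 2" "g' * g = 1\<^sub>m 2"
  proof -
    show "g * g' = 1\<^sub>m 2"
    proof (rule eq_matI)
      fix i j assume ij: "i < dim_row (1\<^sub>m 2 :: 'a mat)" "j < dim_col (1\<^sub>m 2 :: 'a mat)"
      then have "i = 0 \<or> i = 1" "j = 0 \<or> j = 1" by auto
      then show "(g * g') $$ (i,j) = 1\<^sub>m 2 $$ (i,j)"
        using ij d' apply (auto simp: mat22_index[OF g g'c])
        apply (simp_all add: g'_def algebra_simps)
        done
    qed (use g g'c in auto)
    show "g' * g = 1\<^sub>m 2"
    proof (rule eq_matI)
      fix i j assume ij: "i < dim_row (1\<^sub>m 2 :: 'a mat)" "j < dim_col (1\<^sub>m 2 :: 'a mat)"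
      then have "i = 0 \<or> i = 1" "j = 0 \<or> j = 1" by auto
      then show "(g' * g) $$ (i,j) = 1\<^sub>m 2 $$ (i,j)"
        using ij d' by (auto simp: mat22_index[OF g'c g]; simp add: g'_def algebra_simps)
    qed (use g g'c in auto)
  qed
  have bij: "bij_betw (Lg n g) (Mset n) (Mset n)"
  proof (rule bij_betw_byWitness[where f'="Lg n g'"])
    show "\<forall>a\<in>Mset n. Lg n g' (Lg n g a) = a"
      unfolding Lg_def using Lmap_Mset Lmap_comp[OF g'c g] Lmap_one gg' by auto
    show "\<forall>a\<in>Mset n. Lg n g (Lg n g' a) = a"
      unfolding Lg_def using Lmap_Mset Lmap_comp[OF g g'c] Lmap_one gg' by auto
    show "Lg n g ` Mset n \<subseteq> Mset n" "Lg n g' ` Mset n \<subseteq> Mset n"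
      unfolding Lg_def using Lmap_Mset by auto
  qed
  have addMM: "addM m m' \<in> Mset n" if "m \<in> Mset n" "m' \<in> Mset n" for m m' :: "'a vec \<times> 'a vec"
    using that unfolding addM_def Mset_def by auto
  have actMM: "actM m a \<in> Mset n" if "m \<in> Mset n" "a \<in> carrier_mat (2*n) (2*n)" for m :: "'a vec \<times> 'a vec" and a :: "'a mat"
    using that unfolding actM_def Mset_def by auto
  have A: "Lg n g \<in> AutA n"
    unfolding AutA_def
  proof (intro CollectI conjI ballI)
    show "Lg n g \<in> extensional (Mset n)" unfolding Lg_def by simp
    show "bij_betw (Lg n g) (Mset n) (Mset n)" by (rule bij)
    fix m :: "'a vec \<times> 'a vec" assume m: "m \<in> Mset n"
    { fix m' :: "'a vec \<times> 'a vec" assume m': "m' \<in> Mset n"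
      show "Lg n g (addM m m') = addM (Lg n g m) (Lg n g m')"
        unfolding Lg_def using addMM[OF m m'] m m' Lmap_add[OF m m'] by simp }
    { fix a :: "'a mat" assume a: "a \<in> carrier_mat (2*n) (2*n)"
      show "Lg n g (actM m a) = actM (Lg n g m) a"
        unfolding Lg_def using actMM[OF m a] m Lmap_act[OF m a] by simp }
  qed
  have G: "gammaM n \<psi> u (Lg n g m) = gammaM n \<psi> u m" if "u \<in> symA n" "m \<in> Mset n" for u m
    using that unfolding gammaM_def Lg_def by (simp add: gamma_Lmap[OF _ two g] d)
  have C: "chiM n \<psi> (Lg n g m) (Lg n g m') = chiM n \<psi> m m'" if "m \<in> Mset n" "m' \<in> Mset n" for m m'
    using that unfolding chiM_def Lg_def by (simp add: chi_Lmap[OF g] d)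
  show ?thesis unfolding Ugroup_def using A G C by simp
qed

theorem mainTheorem5:
  fixes n :: nat and \<psi> :: "'k::{field,finite} \<Rightarrow> complex"
  assumes "odd (card (UNIV :: 'k set))" and "card (UNIV :: 'k set) > 3" and "n \<ge> 1"
    and "nontriv_add_char \<psi>"
  shows "Ugroup n \<psi> \<cong> (SL2 :: 'k mat monoid)"
proof (rule is_isoI)
  have two: "(2::'k) \<noteq> 0" by (rule two_ne_zero[OF assms(1)])
  have n: "1 \<le> n" using assms(3) by simp
  have inA: "\<beta> \<in> AutA n" if "\<beta> \<in> carrier (Ugroup n \<psi>)" for \<beta> :: "'k vec \<times> 'k vec \<Rightarrow> _"
    using that unfolding Ugroup_def by simp
  have toSL: "coef n \<beta> \<in> carrier SL2" if "\<beta> \<in> carrier (Ugroup n \<psi>)" for \<beta> :: "'k vec \<times> 'k vec \<Rightarrow> _"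
    using U_det[OF that n assms(4)] unfolding SL2_def by simp
  have hom: "coef n \<in> hom (Ugroup n \<psi>) SL2"
    unfolding hom_def
  proof (intro CollectI conjI ballI Pi_I)
    fix \<beta> :: "'k vec \<times> 'k vec \<Rightarrow> _" assume "\<beta> \<in> carrier (Ugroup n \<psi>)"
    then show "coef n \<beta> \<in> carrier SL2" by (rule toSL)
  next
    fix \<beta> \<beta>' :: "'k vec \<times> 'k vec \<Rightarrow> _"
    assume b: "\<beta> \<in> carrier (Ugroup n \<psi>)" and b': "\<beta>' \<in> carrier (Ugroup n \<psi>)"
    have "compose (Mset n) \<beta> \<beta>' = Lg n (coef n \<beta> * coef n \<beta>')"
    proof
      fix m
      show "compose (Mset n) \<beta> \<beta>' m = Lg n (coef n \<beta> * coef n \<beta>') m"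
      proof (cases "m \<in> Mset n")
        case True
        then show ?thesis unfolding compose_def Lg_def
          using AutA_Lmap[OF inA[OF b] n] AutA_Lmap[OF inA[OF b'] n] Lmap_Mset[OF True]
            Lmap_comp[OF coef_carrier coef_carrier True] by simp
      next
        case False then show ?thesis unfolding compose_def Lg_def by simp
      qed
    qed
    then have "coef n (compose (Mset n) \<beta> \<beta>') = coef n \<beta> * coef n \<beta>'"
      using coef_Lg[OF n mult_carrier_mat[OF coef_carrier coef_carrier]] by simp
    then show "coef n (\<beta> \<otimes>\<^bsub>Ugroup n \<psi>\<^esub> \<beta>') = coef n \<beta> \<otimes>\<^bsub>SL2\<^esub> coef n \<beta>'"
      unfolding Ugroup_def SL2_def by simp
  qed
  have inj: "inj_on (coef n) (carrier (Ugroup n \<psi>))"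
  proof (rule inj_onI)
    fix \<beta> \<beta>' :: "'k vec \<times> 'k vec \<Rightarrow> _"
    assume b: "\<beta> \<in> carrier (Ugroup n \<psi>)" and b': "\<beta>' \<in> carrier (Ugroup n \<psi>)" and e: "coef n \<beta> = coef n \<beta>'"
    show "\<beta> = \<beta>'" using AutA_Lg[OF inA[OF b] n] AutA_Lg[OF inA[OF b'] n] e by simp
  qed
  have surj: "coef n ` carrier (Ugroup n \<psi>) = carrier SL2"
  proof
    show "coef n ` carrier (Ugroup n \<psi>) \<subseteq> carrier SL2" using toSL by auto
    show "carrier SL2 \<subseteq> coef n ` carrier (Ugroup n \<psi>)"
    proof
      fix g :: "'k mat" assume "g \<in> carrier SL2"
      then have g: "g \<in> carrier_mat 2 2" "det g = 1" unfolding SL2_def by auto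
      have "Lg n g \<in> carrier (Ugroup n \<psi>)" by (rule Lg_in_U[OF g two])
      moreover have "coef n (Lg n g) = g" by (rule coef_Lg[OF n g(1)])
      ultimately show "g \<in> coef n ` carrier (Ugroup n \<psi>)" by force
    qed
  qed
  show "coef n \<in> iso (Ugroup n \<psi>) SL2"
    unfolding iso_def bij_betw_def using hom inj surj by simp
qed

end
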